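(* Let $A=[x_0,x_1]$ and $B=[y_0,y_1]$ be closed real intervals. There is an algorithm which enumerates all solutions to the one-dimensional grid problem for $A$ and $B$, i.e., all $u\in\mathbb Z[\sqrt2]$ with $u\in A$ and $u^\bullet\in B$. Moreover, the algorithm only requires a constant number of arithmetic operations per solution produced.
   Context: $\mathbb Z[\sqrt2]=\{a+b\sqrt2 : a,b\in\mathbb Z\}\subseteq\mathbb R$, and for $u=a+b\sqrt2$ its conjugate is $u^\bullet=a-b\sqrt2$. Arithmetic operations are addition, subtraction, multiplication, division, exponentiation and logarithm. *)

theory Defs
  imports Complex_Main
begin

definition zsqrt2 :: "real set" where
  "zsqrt2 = {of_int a + of_int b * sqrt 2 | a b. True}"

definition rt2_conj :: "int \<times> int \<Rightarrow> real" where
  "rt2_conj p = of_int (fst p) - of_int (snd p) * sqrt 2"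

definition rt2_val :: "int \<times> int \<Rightarrow> real" where
  "rt2_val p = of_int (fst p) + of_int (snd p) * sqrt 2"

text \<open>Solutions of the 1D grid problem for A = [x0,x1], B = [y0,y1]:
  u = a + b sqrt 2 with u in A and its conjugate in B, represented by the integer
  coordinate pair (a,b) (unique since sqrt 2 is irrational).\<close>

definition grid_solutions :: "real \<Rightarrow> real \<Rightarrow> real \<Rightarrow> real \<Rightarrow> (int \<times> int) set" where
  "grid_solutions x0 x1 y0 y1 =
     {p. x0 \<le> rt2_val p \<and> rt2_val p \<le> x1 \<and> y0 \<le> rt2_conj p \<and> rt2_conj p \<le> y1}"

text \<open>Every executed instruction costs one step.\<close>

datatype instr =
    LoadConst nat int
  | Copy nat nat
  | Add nat nat nat
  | Sub nat nat nat
  | Mul nat nat nat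
  | Dvd nat nat nat
  | Pow nat nat nat
  | Log nat nat nat
  | Floor nat nat
  | JumpLe nat nat nat
  | Jump nat
  | Output nat nat
  | Halt

type_synonym mstate = "nat \<times> (nat \<Rightarrow> real) \<times> (real \<times> real) list"

definition halted :: "instr list \<Rightarrow> mstate \<Rightarrow> bool" where
  "halted P s = (fst s \<ge> length P \<or> P ! fst s = Halt)"

fun exec_instr :: "instr \<Rightarrow> mstate \<Rightarrow> mstate" where
  "exec_instr (LoadConst d c) (pc, r, out) = (Suc pc, r(d := of_int c), out)"
| "exec_instr (Copy d i) (pc, r, out) = (Suc pc, r(d := r i), out)"
| "exec_instr (Add d i j) (pc, r, out) = (Suc pc, r(d := r i + r j), out)"
| "exec_instr (Sub d i j) (pc, r, out) = (Suc pc, r(d := r i - r j), out)"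
| "exec_instr (Mul d i j) (pc, r, out) = (Suc pc, r(d := r i * r j), out)"
| "exec_instr (Dvd d i j) (pc, r, out) = (Suc pc, r(d := r i / r j), out)"
| "exec_instr (Pow d i j) (pc, r, out) = (Suc pc, r(d := r i powr r j), out)"
| "exec_instr (Log d i j) (pc, r, out) = (Suc pc, r(d := log (r i) (r j)), out)"
| "exec_instr (Floor d i) (pc, r, out) = (Suc pc, r(d := of_int \<lfloor>r i\<rfloor>), out)"
| "exec_instr (JumpLe i j t) (pc, r, out) = ((if r i \<le> r j then t else Suc pc), r, out)"
| "exec_instr (Jump t) (pc, r, out) = (t, r, out)"
| "exec_instr (Output i j) (pc, r, out) = (Suc pc, r, out @ [(r i, r j)])"
| "exec_instr Halt s = s"

definition step :: "instr list \<Rightarrow> mstate \<Rightarrow> mstate" where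
  "step P s = (if halted P s then s else exec_instr (P ! fst s) s)"

definition run :: "instr list \<Rightarrow> nat \<Rightarrow> mstate \<Rightarrow> mstate" where
  "run P n = (step P ^^ n)"

definition init_state :: "real \<Rightarrow> real \<Rightarrow> real \<Rightarrow> real \<Rightarrow> mstate" where
  "init_state x0 x1 y0 y1 =
     (0, (\<lambda>_. 0)(0 := x0, 1 := x1, 2 := y0, 3 := y1), [])"

end

theory Submission imports Defs begin
definition prog :: "instr list" where
"prog = [
 LoadConst 4 1,
 LoadConst 5 2,
 Dvd 7 4 5,
 Pow 6 5 7,
 Add 19 6 6,
 LoadConst 8 3,
 Add 8 8 19,
 LoadConst 21 0,
 Sub 9 1 0,
 Sub 10 3 2,
 Add 11 9 4,
 Dvd 11 4 11,
 Add 11 10 11,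
 Mul 11 11 7,
 Log 12 8 11,
 Floor 12 12,
 Pow 13 8 12,
 Dvd 14 4 13,
 Mul 15 13 0,
 Mul 16 13 1,
 Mul 17 14 2,
 Mul 18 14 3,
 Sub 20 15 18,
 Dvd 20 20 19,
 Sub 20 21 20,
 Floor 20 20,
 Sub 22 21 20,
 Sub 23 16 17,
 Dvd 23 23 19,
 Floor 23 23,
 JumpLe 22 23 32,
 Halt,
 Mul 24 22 6,
 Sub 25 15 24,
 Sub 25 21 25,
 Floor 25 25,
 Sub 25 21 25,
 Add 26 17 24,
 Sub 26 21 26,
 Floor 26 26,
 Sub 26 21 26,
 Sub 27 25 26,
 Mul 27 27 27,
 Pow 27 27 7,
 Add 28 25 26,
 Add 28 28 27,
 Mul 28 28 7,
 Sub 29 16 24,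
 Floor 29 29,
 Add 30 18 24,
 Floor 30 30,
 Sub 31 29 30,
 Mul 31 31 31,
 Pow 31 31 7,
 Add 32 29 30,
 Sub 32 32 31,
 Mul 32 32 7,
 JumpLe 28 32 60,
 Add 22 22 4,
 Jump 30,
 Add 33 28 24,
 Mul 33 14 33,
 Sub 34 28 24,
 Mul 34 13 34,
 Add 35 33 34,
 Mul 35 35 7,
 Sub 36 33 34,
 Dvd 36 36 19,
 Output 35 36,
 Add 28 28 4,
 Jump 57]"

lemma len_prog: "length prog = 71" by (simp add: prog_def)

lemma prog_0: "prog ! 0 = LoadConst 4 1" by (simp add: prog_def)
lemma prog_1: "prog ! Suc 0 = LoadConst 5 2" by (simp add: prog_def)
lemma prog_2: "prog ! 2 = Dvd 7 4 5" by (simp add: prog_def)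
lemma prog_3: "prog ! 3 = Pow 6 5 7" by (simp add: prog_def)
lemma prog_4: "prog ! 4 = Add 19 6 6" by (simp add: prog_def)
lemma prog_5: "prog ! 5 = LoadConst 8 3" by (simp add: prog_def)
lemma prog_6: "prog ! 6 = Add 8 8 19" by (simp add: prog_def)
lemma prog_7: "prog ! 7 = LoadConst 21 0" by (simp add: prog_def)
lemma prog_8: "prog ! 8 = Sub 9 1 0" by (simp add: prog_def)
lemma prog_9: "prog ! 9 = Sub 10 3 2" by (simp add: prog_def)
lemma prog_10: "prog ! 10 = Add 11 9 4" by (simp add: prog_def)
lemma prog_11: "prog ! 11 = Dvd 11 4 11" by (simp add: prog_def)
lemma prog_12: "prog ! 12 = Add 11 10 11" by (simp add: prog_def)
lemma prog_13: "prog ! 13 = Mul 11 11 7" by (simp add: prog_def)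
lemma prog_14: "prog ! 14 = Log 12 8 11" by (simp add: prog_def)
lemma prog_15: "prog ! 15 = Floor 12 12" by (simp add: prog_def)
lemma prog_16: "prog ! 16 = Pow 13 8 12" by (simp add: prog_def)
lemma prog_17: "prog ! 17 = Dvd 14 4 13" by (simp add: prog_def)
lemma prog_18: "prog ! 18 = Mul 15 13 0" by (simp add: prog_def)
lemma prog_19: "prog ! 19 = Mul 16 13 1" by (simp add: prog_def)
lemma prog_20: "prog ! 20 = Mul 17 14 2" by (simp add: prog_def)
lemma prog_21: "prog ! 21 = Mul 18 14 3" by (simp add: prog_def)
lemma prog_22: "prog ! 22 = Sub 20 15 18" by (simp add: prog_def)
lemma prog_23: "prog ! 23 = Dvd 20 20 19" by (simp add: prog_def)
lemma prog_24: "prog ! 24 = Sub 20 21 20" by (simp add: prog_def)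
lemma prog_25: "prog ! 25 = Floor 20 20" by (simp add: prog_def)
lemma prog_26: "prog ! 26 = Sub 22 21 20" by (simp add: prog_def)
lemma prog_27: "prog ! 27 = Sub 23 16 17" by (simp add: prog_def)
lemma prog_28: "prog ! 28 = Dvd 23 23 19" by (simp add: prog_def)
lemma prog_29: "prog ! 29 = Floor 23 23" by (simp add: prog_def)
lemma prog_30: "prog ! 30 = JumpLe 22 23 32" by (simp add: prog_def)
lemma prog_31: "prog ! 31 = Halt" by (simp add: prog_def)
lemma prog_32: "prog ! 32 = Mul 24 22 6" by (simp add: prog_def)
lemma prog_33: "prog ! 33 = Sub 25 15 24" by (simp add: prog_def)
lemma prog_34: "prog ! 34 = Sub 25 21 25" by (simp add: prog_def)
lemma prog_35: "prog ! 35 = Floor 25 25" by (simp add: prog_def)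
lemma prog_36: "prog ! 36 = Sub 25 21 25" by (simp add: prog_def)
lemma prog_37: "prog ! 37 = Add 26 17 24" by (simp add: prog_def)
lemma prog_38: "prog ! 38 = Sub 26 21 26" by (simp add: prog_def)
lemma prog_39: "prog ! 39 = Floor 26 26" by (simp add: prog_def)
lemma prog_40: "prog ! 40 = Sub 26 21 26" by (simp add: prog_def)
lemma prog_41: "prog ! 41 = Sub 27 25 26" by (simp add: prog_def)
lemma prog_42: "prog ! 42 = Mul 27 27 27" by (simp add: prog_def)
lemma prog_43: "prog ! 43 = Pow 27 27 7" by (simp add: prog_def)
lemma prog_44: "prog ! 44 = Add 28 25 26" by (simp add: prog_def)
lemma prog_45: "prog ! 45 = Add 28 28 27" by (simp add: prog_def)
lemma prog_46: "prog ! 46 = Mul 28 28 7" by (simp add: prog_def)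
lemma prog_47: "prog ! 47 = Sub 29 16 24" by (simp add: prog_def)
lemma prog_48: "prog ! 48 = Floor 29 29" by (simp add: prog_def)
lemma prog_49: "prog ! 49 = Add 30 18 24" by (simp add: prog_def)
lemma prog_50: "prog ! 50 = Floor 30 30" by (simp add: prog_def)
lemma prog_51: "prog ! 51 = Sub 31 29 30" by (simp add: prog_def)
lemma prog_52: "prog ! 52 = Mul 31 31 31" by (simp add: prog_def)
lemma prog_53: "prog ! 53 = Pow 31 31 7" by (simp add: prog_def)
lemma prog_54: "prog ! 54 = Add 32 29 30" by (simp add: prog_def)
lemma prog_55: "prog ! 55 = Sub 32 32 31" by (simp add: prog_def)
lemma prog_56: "prog ! 56 = Mul 32 32 7" by (simp add: prog_def)
lemma prog_57: "prog ! 57 = JumpLe 28 32 60" by (simp add: prog_def)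
lemma prog_58: "prog ! 58 = Add 22 22 4" by (simp add: prog_def)
lemma prog_59: "prog ! 59 = Jump 30" by (simp add: prog_def)
lemma prog_60: "prog ! 60 = Add 33 28 24" by (simp add: prog_def)
lemma prog_61: "prog ! 61 = Mul 33 14 33" by (simp add: prog_def)
lemma prog_62: "prog ! 62 = Sub 34 28 24" by (simp add: prog_def)
lemma prog_63: "prog ! 63 = Mul 34 13 34" by (simp add: prog_def)
lemma prog_64: "prog ! 64 = Add 35 33 34" by (simp add: prog_def)
lemma prog_65: "prog ! 65 = Mul 35 35 7" by (simp add: prog_def)
lemma prog_66: "prog ! 66 = Sub 36 33 34" by (simp add: prog_def)
lemma prog_67: "prog ! 67 = Dvd 36 36 19" by (simp add: prog_def)
lemma prog_68: "prog ! 68 = Output 35 36" by (simp add: prog_def)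
lemma prog_69: "prog ! 69 = Add 28 28 4" by (simp add: prog_def)
lemma prog_70: "prog ! 70 = Jump 57" by (simp add: prog_def)
lemma st_0[simp]: "step prog (0, r, out) = (1, r(4 := 1), out)"
  by (simp add: step_def halted_def len_prog prog_0)
lemma st_1[simp]: "step prog (Suc 0, r, out) = (2, r(5 := 2), out)"
  by (simp add: step_def halted_def len_prog prog_1)
lemma st_2[simp]: "step prog (2, r, out) = (3, r(7 := r 4 / r 5), out)"
  by (simp add: step_def halted_def len_prog prog_2)
lemma st_3[simp]: "step prog (3, r, out) = (4, r(6 := r 5 powr r 7), out)"
  by (simp add: step_def halted_def len_prog prog_3)
lemma st_4[simp]: "step prog (4, r, out) = (5, r(19 := r 6 + r 6), out)"
  by (simp add: step_def halted_def len_prog prog_4)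
lemma st_5[simp]: "step prog (5, r, out) = (6, r(8 := 3), out)"
  by (simp add: step_def halted_def len_prog prog_5)
lemma st_6[simp]: "step prog (6, r, out) = (7, r(8 := r 8 + r 19), out)"
  by (simp add: step_def halted_def len_prog prog_6)
lemma st_7[simp]: "step prog (7, r, out) = (8, r(21 := 0), out)"
  by (simp add: step_def halted_def len_prog prog_7)
lemma st_8[simp]: "step prog (8, r, out) = (9, r(9 := r 1 - r 0), out)"
  by (simp add: step_def halted_def len_prog prog_8)
lemma st_9[simp]: "step prog (9, r, out) = (10, r(10 := r 3 - r 2), out)"
  by (simp add: step_def halted_def len_prog prog_9)
lemma st_10[simp]: "step prog (10, r, out) = (11, r(11 := r 9 + r 4), out)"
  by (simp add: step_def halted_def len_prog prog_10)
lemma st_11[simp]: "step prog (11, r, out) = (12, r(11 := r 4 / r 11), out)"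
  by (simp add: step_def halted_def len_prog prog_11)
lemma st_12[simp]: "step prog (12, r, out) = (13, r(11 := r 10 + r 11), out)"
  by (simp add: step_def halted_def len_prog prog_12)
lemma st_13[simp]: "step prog (13, r, out) = (14, r(11 := r 11 * r 7), out)"
  by (simp add: step_def halted_def len_prog prog_13)
lemma st_14[simp]: "step prog (14, r, out) = (15, r(12 := log (r 8) (r 11)), out)"
  by (simp add: step_def halted_def len_prog prog_14)
lemma st_15[simp]: "step prog (15, r, out) = (16, r(12 := of_int \<lfloor>r 12\<rfloor>), out)"
  by (simp add: step_def halted_def len_prog prog_15)
lemma st_16[simp]: "step prog (16, r, out) = (17, r(13 := r 8 powr r 12), out)"
  by (simp add: step_def halted_def len_prog prog_16)
lemma st_17[simp]: "step prog (17, r, out) = (18, r(14 := r 4 / r 13), out)"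
  by (simp add: step_def halted_def len_prog prog_17)
lemma st_18[simp]: "step prog (18, r, out) = (19, r(15 := r 13 * r 0), out)"
  by (simp add: step_def halted_def len_prog prog_18)
lemma st_19[simp]: "step prog (19, r, out) = (20, r(16 := r 13 * r 1), out)"
  by (simp add: step_def halted_def len_prog prog_19)
lemma st_20[simp]: "step prog (20, r, out) = (21, r(17 := r 14 * r 2), out)"
  by (simp add: step_def halted_def len_prog prog_20)
lemma st_21[simp]: "step prog (21, r, out) = (22, r(18 := r 14 * r 3), out)"
  by (simp add: step_def halted_def len_prog prog_21)
lemma st_22[simp]: "step prog (22, r, out) = (23, r(20 := r 15 - r 18), out)"
  by (simp add: step_def halted_def len_prog prog_22)
lemma st_23[simp]: "step prog (23, r, out) = (24, r(20 := r 20 / r 19), out)"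
  by (simp add: step_def halted_def len_prog prog_23)
lemma st_24[simp]: "step prog (24, r, out) = (25, r(20 := r 21 - r 20), out)"
  by (simp add: step_def halted_def len_prog prog_24)
lemma st_25[simp]: "step prog (25, r, out) = (26, r(20 := of_int \<lfloor>r 20\<rfloor>), out)"
  by (simp add: step_def halted_def len_prog prog_25)
lemma st_26[simp]: "step prog (26, r, out) = (27, r(22 := r 21 - r 20), out)"
  by (simp add: step_def halted_def len_prog prog_26)
lemma st_27[simp]: "step prog (27, r, out) = (28, r(23 := r 16 - r 17), out)"
  by (simp add: step_def halted_def len_prog prog_27)
lemma st_28[simp]: "step prog (28, r, out) = (29, r(23 := r 23 / r 19), out)"
  by (simp add: step_def halted_def len_prog prog_28)
lemma st_29[simp]: "step prog (29, r, out) = (30, r(23 := of_int \<lfloor>r 23\<rfloor>), out)"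
  by (simp add: step_def halted_def len_prog prog_29)
lemma st_30[simp]: "step prog (30, r, out) = ((if r 22 \<le> r 23 then 32 else 31), r, out)"
  by (simp add: step_def halted_def len_prog prog_30)
lemma st_31[simp]: "step prog (31, r, out) = (31, r, out)"
  by (simp add: step_def halted_def len_prog prog_31)
lemma st_32[simp]: "step prog (32, r, out) = (33, r(24 := r 22 * r 6), out)"
  by (simp add: step_def halted_def len_prog prog_32)
lemma st_33[simp]: "step prog (33, r, out) = (34, r(25 := r 15 - r 24), out)"
  by (simp add: step_def halted_def len_prog prog_33)
lemma st_34[simp]: "step prog (34, r, out) = (35, r(25 := r 21 - r 25), out)"
  by (simp add: step_def halted_def len_prog prog_34)
lemma st_35[simp]: "step prog (35, r, out) = (36, r(25 := of_int \<lfloor>r 25\<rfloor>), out)"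
  by (simp add: step_def halted_def len_prog prog_35)
lemma st_36[simp]: "step prog (36, r, out) = (37, r(25 := r 21 - r 25), out)"
  by (simp add: step_def halted_def len_prog prog_36)
lemma st_37[simp]: "step prog (37, r, out) = (38, r(26 := r 17 + r 24), out)"
  by (simp add: step_def halted_def len_prog prog_37)
lemma st_38[simp]: "step prog (38, r, out) = (39, r(26 := r 21 - r 26), out)"
  by (simp add: step_def halted_def len_prog prog_38)
lemma st_39[simp]: "step prog (39, r, out) = (40, r(26 := of_int \<lfloor>r 26\<rfloor>), out)"
  by (simp add: step_def halted_def len_prog prog_39)
lemma st_40[simp]: "step prog (40, r, out) = (41, r(26 := r 21 - r 26), out)"
  by (simp add: step_def halted_def len_prog prog_40)
lemma st_41[simp]: "step prog (41, r, out) = (42, r(27 := r 25 - r 26), out)"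
  by (simp add: step_def halted_def len_prog prog_41)
lemma st_42[simp]: "step prog (42, r, out) = (43, r(27 := r 27 * r 27), out)"
  by (simp add: step_def halted_def len_prog prog_42)
lemma st_43[simp]: "step prog (43, r, out) = (44, r(27 := r 27 powr r 7), out)"
  by (simp add: step_def halted_def len_prog prog_43)
lemma st_44[simp]: "step prog (44, r, out) = (45, r(28 := r 25 + r 26), out)"
  by (simp add: step_def halted_def len_prog prog_44)
lemma st_45[simp]: "step prog (45, r, out) = (46, r(28 := r 28 + r 27), out)"
  by (simp add: step_def halted_def len_prog prog_45)
lemma st_46[simp]: "step prog (46, r, out) = (47, r(28 := r 28 * r 7), out)"
  by (simp add: step_def halted_def len_prog prog_46)
lemma st_47[simp]: "step prog (47, r, out) = (48, r(29 := r 16 - r 24), out)"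
  by (simp add: step_def halted_def len_prog prog_47)
lemma st_48[simp]: "step prog (48, r, out) = (49, r(29 := of_int \<lfloor>r 29\<rfloor>), out)"
  by (simp add: step_def halted_def len_prog prog_48)
lemma st_49[simp]: "step prog (49, r, out) = (50, r(30 := r 18 + r 24), out)"
  by (simp add: step_def halted_def len_prog prog_49)
lemma st_50[simp]: "step prog (50, r, out) = (51, r(30 := of_int \<lfloor>r 30\<rfloor>), out)"
  by (simp add: step_def halted_def len_prog prog_50)
lemma st_51[simp]: "step prog (51, r, out) = (52, r(31 := r 29 - r 30), out)"
  by (simp add: step_def halted_def len_prog prog_51)
lemma st_52[simp]: "step prog (52, r, out) = (53, r(31 := r 31 * r 31), out)"
  by (simp add: step_def halted_def len_prog prog_52)
lemma st_53[simp]: "step prog (53, r, out) = (54, r(31 := r 31 powr r 7), out)"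
  by (simp add: step_def halted_def len_prog prog_53)
lemma st_54[simp]: "step prog (54, r, out) = (55, r(32 := r 29 + r 30), out)"
  by (simp add: step_def halted_def len_prog prog_54)
lemma st_55[simp]: "step prog (55, r, out) = (56, r(32 := r 32 - r 31), out)"
  by (simp add: step_def halted_def len_prog prog_55)
lemma st_56[simp]: "step prog (56, r, out) = (57, r(32 := r 32 * r 7), out)"
  by (simp add: step_def halted_def len_prog prog_56)
lemma st_57[simp]: "step prog (57, r, out) = ((if r 28 \<le> r 32 then 60 else 58), r, out)"
  by (simp add: step_def halted_def len_prog prog_57)
lemma st_58[simp]: "step prog (58, r, out) = (59, r(22 := r 22 + r 4), out)"
  by (simp add: step_def halted_def len_prog prog_58)
lemma st_59[simp]: "step prog (59, r, out) = (30, r, out)"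
  by (simp add: step_def halted_def len_prog prog_59)
lemma st_60[simp]: "step prog (60, r, out) = (61, r(33 := r 28 + r 24), out)"
  by (simp add: step_def halted_def len_prog prog_60)
lemma st_61[simp]: "step prog (61, r, out) = (62, r(33 := r 14 * r 33), out)"
  by (simp add: step_def halted_def len_prog prog_61)
lemma st_62[simp]: "step prog (62, r, out) = (63, r(34 := r 28 - r 24), out)"
  by (simp add: step_def halted_def len_prog prog_62)
lemma st_63[simp]: "step prog (63, r, out) = (64, r(34 := r 13 * r 34), out)"
  by (simp add: step_def halted_def len_prog prog_63)
lemma st_64[simp]: "step prog (64, r, out) = (65, r(35 := r 33 + r 34), out)"
  by (simp add: step_def halted_def len_prog prog_64)
lemma st_65[simp]: "step prog (65, r, out) = (66, r(35 := r 35 * r 7), out)"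
  by (simp add: step_def halted_def len_prog prog_65)
lemma st_66[simp]: "step prog (66, r, out) = (67, r(36 := r 33 - r 34), out)"
  by (simp add: step_def halted_def len_prog prog_66)
lemma st_67[simp]: "step prog (67, r, out) = (68, r(36 := r 36 / r 19), out)"
  by (simp add: step_def halted_def len_prog prog_67)
lemma st_68[simp]: "step prog (68, r, out) = (69, r, out @ [(r 35, r 36)])"
  by (simp add: step_def halted_def len_prog prog_68)
lemma st_69[simp]: "step prog (69, r, out) = (70, r(28 := r 28 + r 4), out)"
  by (simp add: step_def halted_def len_prog prog_69)
lemma st_70[simp]: "step prog (70, r, out) = (57, r, out)"
  by (simp add: step_def halted_def len_prog prog_70)

lemma run_Suc: "run P (Suc n) s = run P n (step P s)"
  unfolding run_def by (simp add: funpow_Suc_right del: funpow.simps)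
lemma run_num: "run P (numeral k) s = run P (pred_numeral k) (step P s)"
  by (simp add: numeral_eq_Suc run_Suc)
lemma run_0: "run P 0 s = s" by (simp add: run_def)
lemma run_add: "run P (m + n) s = run P n (run P m s)"
  unfolding run_def by (simp add: funpow_add add.commute[of m n])

lemma ceil_via_floor: "- real_of_int \<lfloor>- x\<rfloor> = real_of_int \<lceil>x\<rceil>"
  by (simp add: ceiling_def)

lemma sq_powr_half: "((z::real) * z) powr (1/2) = \<bar>z\<bar>"
  by (simp add: powr_half_sqrt)

definition lo :: "real \<Rightarrow> real \<Rightarrow> int \<Rightarrow> int" where
  "lo X0 Y0 b = max \<lceil>X0 - of_int b * sqrt 2\<rceil> \<lceil>Y0 + of_int b * sqrt 2\<rceil>"
definition hi :: "real \<Rightarrow> real \<Rightarrow> int \<Rightarrow> int" where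
  "hi X1 Y1 b = min \<lfloor>X1 - of_int b * sqrt 2\<rfloor> \<lfloor>Y1 + of_int b * sqrt 2\<rfloor>"

lemma body:
  assumes "r 4 = 1" "r 6 = sqrt 2" "r 7 = 1/2" "r 15 = X0" "r 16 = X1" "r 17 = Y0" "r 18 = Y1"
    "r 21 = 0" "r 22 = of_int b" "r 23 = of_int BM" "b \<le> BM"
  shows "\<exists>r'. run prog 26 (30, r, out) = (57, r', out) \<and> r' 28 = of_int (lo X0 Y0 b)
     \<and> r' 32 = of_int (hi X1 Y1 b) \<and> r' 24 = of_int b * sqrt 2 \<and> (\<forall>j. j < 24 \<longrightarrow> r' j = r j)"
  apply (simp add: assms run_num run_Suc run_0 sq_powr_half)
  apply (simp add: lo_def hi_def ceiling_def max_def min_def)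
  done

definition outp :: "real \<Rightarrow> int \<Rightarrow> int \<Rightarrow> real \<times> real" where
  "outp m a b = ((1/m * (of_int a + of_int b * sqrt 2) + m * (of_int a - of_int b * sqrt 2)) * (1/2),
     (1/m * (of_int a + of_int b * sqrt 2) - m * (of_int a - of_int b * sqrt 2)) / (2 * sqrt 2))"

lemma iter:
  assumes "r 4 = 1" "r 7 = 1/2" "r 13 = m" "r 14 = 1/m" "r 19 = 2 * sqrt 2"
    "r 24 = of_int b * sqrt 2" "r 28 = of_int a" "r 32 = of_int H" "a \<le> H"
  shows "\<exists>r'. run prog 12 (57, r, out) = (57, r', out @ [outp m a b]) \<and> r' 28 = of_int (a + 1)
     \<and> (\<forall>j. j < 28 \<longrightarrow> r' j = r j) \<and> r' 32 = r 32"
  apply (simp add: assms run_num run_Suc run_0)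
  apply (simp add: outp_def)
  done

lemma exitl:
  assumes "r 4 = 1" "r 28 = of_int a" "r 32 = of_int H" "\<not> a \<le> H"
  shows "run prog 3 (57, r, out) = (30, r(22 := r 22 + 1), out)"
  using assms by (simp add: run_num run_Suc run_0)

lemma inner:
  "\<And>a r out. r 4 = 1 \<Longrightarrow> r 7 = 1/2 \<Longrightarrow> r 13 = m \<Longrightarrow> r 14 = 1/m \<Longrightarrow> r 19 = 2 * sqrt 2 \<Longrightarrow>
    r 24 = of_int b * sqrt 2 \<Longrightarrow> r 28 = of_int a \<Longrightarrow> r 32 = of_int H \<Longrightarrow> N = nat (H - a + 1) \<Longrightarrow>
   \<exists>r'. run prog (12 * N + 3) (57, r, out) = (30, r', out @ map (\<lambda>a'. outp m a' b) [a..H])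
      \<and> r' 22 = r 22 + 1 \<and> (\<forall>j. j < 24 \<and> j \<noteq> 22 \<longrightarrow> r' j = r j)"
proof (induction N)
  case 0
  then have "\<not> a \<le> H" by simp
  with 0 show ?case by (simp add: exitl)
next
  case (Suc N a r out)
  then have aH: "a \<le> H" by simp
  obtain r1 where r1: "run prog 12 (57, r, out) = (57, r1, out @ [outp m a b])" "r1 28 = of_int (a + 1)"
     "\<forall>j. j < 28 \<longrightarrow> r1 j = r j" "r1 32 = r 32"
    using iter[OF Suc.prems(1-8) aH] by blast
  have "N = nat (H - (a+1) + 1)" using Suc.prems(9) by simp
  then obtain r' where r': "run prog (12 * N + 3) (57, r1, out @ [outp m a b]) = (30, r', (out @ [outp m a b]) @ map (\<lambda>a'. outp m a' b) [a+1..H])"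
      "r' 22 = r1 22 + 1" "\<forall>j. j < 24 \<and> j \<noteq> 22 \<longrightarrow> r' j = r1 j"
    using Suc.IH[of r1 "a+1" "out @ [outp m a b]"] Suc.prems r1 by auto
  have "12 * Suc N + 3 = 12 + (12 * N + 3)" by simp
  then have "run prog (12 * Suc N + 3) (57, r, out) = (30, r', (out @ [outp m a b]) @ map (\<lambda>a'. outp m a' b) [a+1..H])"
    using r1(1) r'(1) by (simp only: run_add)
  moreover have "[a..H] = a # [a+1..H]" using aH by (simp add: upto_rec1)
  ultimately show ?case using r' r1 by auto
qed

definition outs :: "real \<Rightarrow> real \<Rightarrow> real \<Rightarrow> real \<Rightarrow> real \<Rightarrow> int \<Rightarrow> (real \<times> real) list" where
  "outs m X0 X1 Y0 Y1 b = map (\<lambda>a'. outp m a' b) [lo X0 Y0 b..hi X1 Y1 b]"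

lemma outer:
  "\<And>b r out. r 4 = 1 \<Longrightarrow> r 6 = sqrt 2 \<Longrightarrow> r 7 = 1/2 \<Longrightarrow> r 13 = m \<Longrightarrow> r 14 = 1/m \<Longrightarrow>
    r 15 = X0 \<Longrightarrow> r 16 = X1 \<Longrightarrow> r 17 = Y0 \<Longrightarrow> r 18 = Y1 \<Longrightarrow> r 19 = 2 * sqrt 2 \<Longrightarrow> r 21 = 0 \<Longrightarrow>
    r 22 = of_int b \<Longrightarrow> r 23 = of_int BM \<Longrightarrow> N = nat (BM - b + 1) \<Longrightarrow>
   \<exists>r'. run prog (1 + 29 * N + 12 * length (concat (map (outs m X0 X1 Y0 Y1) [b..BM]))) (30, r, out)
       = (31, r', out @ concat (map (outs m X0 X1 Y0 Y1) [b..BM]))"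
proof (induction N)
  case 0
  then have "\<not> b \<le> BM" by simp
  with 0 show ?case by (simp add: run_Suc run_0)
next
  case (Suc N b r out)
  then have bB: "b \<le> BM" by simp
  obtain r1 where r1: "run prog 26 (30, r, out) = (57, r1, out)" "r1 28 = of_int (lo X0 Y0 b)"
     "r1 32 = of_int (hi X1 Y1 b)" "r1 24 = of_int b * sqrt 2" "\<forall>j. j < 24 \<longrightarrow> r1 j = r j"
    using body[OF Suc.prems(1,2,3,6,7,8,9,11,12,13) bB] by blast
  define c where "c = nat (hi X1 Y1 b - lo X0 Y0 b + 1)"
  obtain r2 where r2: "run prog (12 * c + 3) (57, r1, out) = (30, r2, out @ outs m X0 X1 Y0 Y1 b)"
      "r2 22 = r1 22 + 1" "\<forall>j. j < 24 \<and> j \<noteq> 22 \<longrightarrow> r2 j = r1 j"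
    using inner[of r1 m b "lo X0 Y0 b" "hi X1 Y1 b" c out] Suc.prems r1 unfolding outs_def c_def by auto
  have N: "N = nat (BM - (b + 1) + 1)" using Suc.prems(14) by simp
  have r2v: "r2 4 = 1" "r2 6 = sqrt 2" "r2 7 = 1/2" "r2 13 = m" "r2 14 = 1/m"
    "r2 15 = X0" "r2 16 = X1" "r2 17 = Y0" "r2 18 = Y1" "r2 19 = 2 * sqrt 2" "r2 21 = 0"
    "r2 22 = of_int (b+1)" "r2 23 = of_int BM"
    using r2 r1 Suc.prems by auto
  obtain r' where r': "run prog (1 + 29 * N + 12 * length (concat (map (outs m X0 X1 Y0 Y1) [b+1..BM])))
        (30, r2, out @ outs m X0 X1 Y0 Y1 b) = (31, r', (out @ outs m X0 X1 Y0 Y1 b) @ concat (map (outs m X0 X1 Y0 Y1) [b+1..BM]))"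
    using Suc.IH[OF r2v N] by blast
  have ul: "[b..BM] = b # [b+1..BM]" using bB by (simp add: upto_rec1)
  have lc: "length (outs m X0 X1 Y0 Y1 b) = c" by (simp add: outs_def c_def)
  have "1 + 29 * Suc N + 12 * length (concat (map (outs m X0 X1 Y0 Y1) [b..BM]))
     = 26 + ((12 * c + 3) + (1 + 29 * N + 12 * length (concat (map (outs m X0 X1 Y0 Y1) [b+1..BM]))))"
    by (simp add: ul lc)
  then show ?case using r1(1) r2(1) r' ul by (simp only: run_add) simp
qed

definition mu :: real where "mu = 3 + 2 * sqrt 2"
definition mm :: "real \<Rightarrow> real \<Rightarrow> real \<Rightarrow> real \<Rightarrow> real" where
  "mm x0 x1 y0 y1 = mu powr of_int \<lfloor>log mu ((y1 - y0 + 1 / (x1 - x0 + 1)) * (1/2))\<rfloor>"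

lemma prelude:
  "\<exists>r. run prog 30 (init_state x0 x1 y0 y1) = (30, r, []) \<and>
     r 4 = 1 \<and> r 6 = sqrt 2 \<and> r 7 = 1/2 \<and> r 13 = mm x0 x1 y0 y1 \<and> r 14 = 1 / mm x0 x1 y0 y1 \<and>
     r 15 = mm x0 x1 y0 y1 * x0 \<and> r 16 = mm x0 x1 y0 y1 * x1 \<and>
     r 17 = 1 / mm x0 x1 y0 y1 * y0 \<and> r 18 = 1 / mm x0 x1 y0 y1 * y1 \<and> r 19 = 2 * sqrt 2 \<and> r 21 = 0 \<and>
     r 22 = of_int \<lceil>(mm x0 x1 y0 y1 * x0 - 1 / mm x0 x1 y0 y1 * y1) / (2 * sqrt 2)\<rceil> \<and>
     r 23 = of_int \<lfloor>(mm x0 x1 y0 y1 * x1 - 1 / mm x0 x1 y0 y1 * y0) / (2 * sqrt 2)\<rfloor>"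
  unfolding init_state_def
  by (simp add: run_num run_Suc run_0 powr_half_sqrt mm_def mu_def ceiling_def)




lemma mu_gt1: "mu > 1"
proof -
  have "sqrt 2 > 0" by simp
  thus ?thesis unfolding mu_def by linarith
qed
lemma mu_lt6: "mu < 6"
proof -
  have "sqrt 2 < 3/2" by (rule real_less_lsqrt) (auto simp: power2_eq_square)
  thus ?thesis by (simp add: mu_def)
qed

lemma s2: "sqrt 2 * sqrt 2 = (2::real)" by simp

lemma mu_inv: "inverse mu = 3 - 2 * sqrt 2"
proof -
  have "mu * (3 - 2 * sqrt 2) = 1" unfolding mu_def by (simp add: algebra_simps)
  thus ?thesis by (simp add: inverse_unique)
qed

lemma mu_nat: "\<exists>(p::int) (q::int). mu ^ n = of_int p + of_int q * sqrt 2 \<and> (3 - 2 * sqrt 2) ^ n = of_int p - of_int q * sqrt 2"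
proof (induction n)
  case 0
  show ?case by (rule exI[of _ 1], rule exI[of _ 0]) simp
next
  case (Suc n)
  then obtain p q :: int where pq: "mu ^ n = p + q * sqrt 2" "(3 - 2 * sqrt 2) ^ n = p - q * sqrt 2" by blast
  show ?case
  proof (rule exI[of _ "3*p + 4*q"], rule exI[of _ "2*p + 3*q"])
    have "mu ^ Suc n = (p + q * sqrt 2) * (3 + 2 * sqrt 2)" using pq by (simp add: mu_def mult.commute)
    also have "\<dots> = of_int (3*p + 4*q) + of_int (2*p + 3*q) * sqrt 2" by (simp add: algebra_simps)
    finally have 1: "mu ^ Suc n = of_int (3*p + 4*q) + of_int (2*p + 3*q) * sqrt 2" .
    have "(3 - 2 * sqrt 2) ^ Suc n = (p - q * sqrt 2) * (3 - 2 * sqrt 2)" using pq by (simp add: mult.commute)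
    also have "\<dots> = of_int (3*p + 4*q) - of_int (2*p + 3*q) * sqrt 2" by (simp add: algebra_simps)
    finally show "mu ^ Suc n = of_int (3*p + 4*q) + of_int (2*p + 3*q) * sqrt 2 \<and>
       (3 - 2 * sqrt 2) ^ Suc n = of_int (3*p + 4*q) - of_int (2*p + 3*q) * sqrt 2" using 1 by simp
  qed
qed

lemma mu_int: "\<exists>(p::int) (q::int). mu powr of_int k = of_int p + of_int q * sqrt 2 \<and> mu powr of_int (-k) = of_int p - of_int q * sqrt 2"
proof (cases "k \<ge> 0")
  case True
  then obtain n where k: "k = int n" using nonneg_eq_int by blast
  obtain p q :: int where pq: "mu ^ n = p + q * sqrt 2" "(3 - 2 * sqrt 2) ^ n = p - q * sqrt 2"
    using mu_nat by blast
  have "mu powr of_int k = mu ^ n" using mu_gt1 k by (simp add: powr_realpow)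
  moreover have "mu powr of_int (-k) = (3 - 2 * sqrt 2) ^ n" using mu_gt1 k
    by (simp add: powr_minus powr_realpow power_inverse[symmetric] mu_inv[symmetric])
  ultimately show ?thesis using pq by (intro exI[of _ p] exI[of _ q]) simp
next
  case False
  define n where "n = nat (-k)"
  have k: "k = - int n" using False n_def by simp
  obtain p q :: int where pq: "mu ^ n = p + q * sqrt 2" "(3 - 2 * sqrt 2) ^ n = p - q * sqrt 2"
    using mu_nat by blast
  have "mu powr of_int (-k) = mu ^ n" using mu_gt1 k by (simp add: powr_realpow)
  moreover have "mu powr of_int k = (3 - 2 * sqrt 2) ^ n" using mu_gt1 k
    by (simp add: powr_minus powr_realpow power_inverse[symmetric] mu_inv[symmetric])
  ultimately show ?thesis using pq by (intro exI[of _ p] exI[of _ "-q"]) simp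
qed

lemma strip_sub:
  fixes c l w :: real
  assumes "c > 0"
  shows "{b::int. l \<le> c * of_int b \<and> c * of_int b \<le> l + w} \<subseteq> {\<lceil>l / c\<rceil>..\<lfloor>(l + w) / c\<rfloor>}"
proof
  fix b assume "b \<in> {b::int. l \<le> c * of_int b \<and> c * of_int b \<le> l + w}"
  then have "l / c \<le> of_int b" "of_int b \<le> (l + w) / c" using assms
    by (auto simp: field_simps mult.commute)
  then show "b \<in> {\<lceil>l / c\<rceil>..\<lfloor>(l + w) / c\<rfloor>}" by (simp add: ceiling_le_iff le_floor_iff)
qed

lemma finite_strip:
  fixes c l w :: real
  assumes "c > 0"
  shows "finite {b::int. l \<le> c * of_int b \<and> c * of_int b \<le> l + w}"
  by (rule finite_subset[OF strip_sub[OF assms]]) simp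

lemma card_strip:
  fixes c l w :: real
  assumes "c > 0" "w \<ge> 0"
  shows "real (card {b::int. l \<le> c * of_int b \<and> c * of_int b \<le> l + w}) \<le> w / c + 1"
proof -
  let ?i = "\<lceil>l / c\<rceil>" and ?j = "\<lfloor>(l + w) / c\<rfloor>"
  have sub: "{b::int. l \<le> c * of_int b \<and> c * of_int b \<le> l + w} \<subseteq> {?i..?j}"
  proof
    fix b assume "b \<in> {b::int. l \<le> c * of_int b \<and> c * of_int b \<le> l + w}"
    then have "l / c \<le> of_int b" "of_int b \<le> (l + w) / c" using assms
      by (auto simp: field_simps mult.commute)
    then show "b \<in> {?i..?j}" by (simp add: ceiling_le_iff le_floor_iff)
  qed
  have "card {b::int. l \<le> c * of_int b \<and> c * of_int b \<le> l + w} \<le> card {?i..?j}"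
    by (rule card_mono[OF _ sub]) simp
  also have "\<dots> = nat (?j - ?i + 1)" by simp
  finally have 1: "real (card {b::int. l \<le> c * of_int b \<and> c * of_int b \<le> l + w}) \<le> real (nat (?j - ?i + 1))" by linarith
  have "real_of_int ?j \<le> (l + w) / c" "l / c \<le> real_of_int ?i" by linarith+
  then have "real_of_int (?j - ?i + 1) \<le> (l + w) / c - l / c + 1" by linarith
  also have "(l + w) / c - l / c = w / c" by (simp add: diff_divide_distrib[symmetric])
  finally have "real_of_int (?j - ?i + 1) \<le> w / c + 1" .
  moreover have "0 \<le> w / c + 1" using assms by simp
  ultimately have "real (nat (?j - ?i + 1)) \<le> w / c + 1" by (cases "?j - ?i + 1 \<ge> 0") auto
  with 1 show ?thesis by linarith
qed


lemma outp_int: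
  assumes "1/m = of_int p + of_int q * sqrt 2" "m = of_int p - of_int q * sqrt 2"
  shows "outp m a b = (of_int (p*a + 2*q*b), of_int (q*a + p*b))"
proof -
  let ?s = "sqrt 2 :: real"
  have e1: "1/m * (of_int a + of_int b * ?s) + m * (of_int a - of_int b * ?s)
      = 2 * of_int (p*a + 2*q*b)"
    unfolding assms(1) by (subst assms(2)) (simp add: algebra_simps)
  have e2: "1/m * (of_int a + of_int b * ?s) - m * (of_int a - of_int b * ?s)
      = (2 * ?s) * of_int (q*a + p*b)"
    unfolding assms(1) by (subst assms(2)) (simp add: algebra_simps)
  show ?thesis unfolding outp_def e1 e2 by simp
qed

definition Sc :: "real \<Rightarrow> real \<Rightarrow> real \<Rightarrow> real \<Rightarrow> (int \<times> int) set" where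
  "Sc X0 X1 Y0 Y1 = {(a, b). X0 \<le> of_int a + of_int b * sqrt 2 \<and> of_int a + of_int b * sqrt 2 \<le> X1
      \<and> Y0 \<le> of_int a - of_int b * sqrt 2 \<and> of_int a - of_int b * sqrt 2 \<le> Y1}"

definition PL :: "real \<Rightarrow> real \<Rightarrow> real \<Rightarrow> real \<Rightarrow> (int \<times> int) list" where
  "PL X0 X1 Y0 Y1 = concat (map (\<lambda>b. map (\<lambda>a. (a, b)) [lo X0 Y0 b..hi X1 Y1 b])
      [\<lceil>(X0 - Y1) / (2 * sqrt 2)\<rceil>..\<lfloor>(X1 - Y0) / (2 * sqrt 2)\<rfloor>])"

lemma distinct_pairs:
  "(\<And>b. distinct (F b)) \<Longrightarrow> distinct bs \<Longrightarrow> distinct (concat (map (\<lambda>b. map (\<lambda>a. (a, b)) (F b :: int list)) bs))"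
  by (induction bs) (auto simp: distinct_map inj_on_def)

lemma distinct_PL: "distinct (PL X0 X1 Y0 Y1)"
  unfolding PL_def by (rule distinct_pairs) simp_all

lemma set_PL: "set (PL X0 X1 Y0 Y1) = Sc X0 X1 Y0 Y1"
proof -
  have "(a, b) \<in> set (PL X0 X1 Y0 Y1) \<longleftrightarrow> (a, b) \<in> Sc X0 X1 Y0 Y1" for a b
  proof
    assume "(a, b) \<in> set (PL X0 X1 Y0 Y1)"
    then have "lo X0 Y0 b \<le> a" "a \<le> hi X1 Y1 b" unfolding PL_def by auto
    then show "(a, b) \<in> Sc X0 X1 Y0 Y1"
      unfolding lo_def hi_def Sc_def by (auto simp: ceiling_le_iff le_floor_iff)
  next
    assume "(a, b) \<in> Sc X0 X1 Y0 Y1"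
    then have h: "X0 \<le> of_int a + of_int b * sqrt 2" "of_int a + of_int b * sqrt 2 \<le> X1"
      "Y0 \<le> of_int a - of_int b * sqrt 2" "of_int a - of_int b * sqrt 2 \<le> Y1" unfolding Sc_def by auto
    have s: "sqrt 2 > 0" by simp
    have "X0 - Y1 \<le> 2 * (of_int b * sqrt 2)" "2 * (of_int b * sqrt 2) \<le> X1 - Y0" using h by linarith+
    then have "X0 - Y1 \<le> 2 * sqrt 2 * of_int b" "2 * sqrt 2 * of_int b \<le> X1 - Y0" by (simp_all add: ac_simps)
    then have "(X0 - Y1) / (2 * sqrt 2) \<le> of_int b" "of_int b \<le> (X1 - Y0) / (2 * sqrt 2)" using s
      by (simp_all add: divide_le_eq le_divide_eq mult.commute)
    then have "\<lceil>(X0 - Y1) / (2 * sqrt 2)\<rceil> \<le> b" "b \<le> \<lfloor>(X1 - Y0) / (2 * sqrt 2)\<rfloor>"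
      by (simp_all add: ceiling_le_iff le_floor_iff)
    moreover have "lo X0 Y0 b \<le> a" "a \<le> hi X1 Y1 b" using h unfolding lo_def hi_def
      by (auto simp: ceiling_le_iff le_floor_iff algebra_simps)
    ultimately show "(a, b) \<in> set (PL X0 X1 Y0 Y1)" unfolding PL_def by (auto intro!: bexI[of _ b])
  qed
  then show ?thesis by auto
qed

lemma grid_image:
  assumes m: "m > 0" and pq: "1/m = of_int p + of_int q * sqrt 2" "m = of_int p - of_int q * sqrt 2"
  shows "grid_solutions x0 x1 y0 y1 = (\<lambda>(a, b). (p*a + 2*q*b, q*a + p*b)) ` Sc (m*x0) (m*x1) (1/m*y0) (1/m*y1)"
proof -
  let ?s = "sqrt 2 :: real"
  have "1 = 1/m * m" using m by simp
  also have "\<dots> = of_int (p*p - 2*q*q)" unfolding pq(1) by (subst pq(2)) (simp add: algebra_simps)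
  finally have u: "p*p - 2*q*q = 1" by linarith
  have val: "rt2_val (p*a + 2*q*b, q*a + p*b) = 1/m * (of_int a + of_int b * ?s)" for a b
    unfolding rt2_val_def pq(1) by (simp add: algebra_simps)
  have cnj: "rt2_conj (p*a + 2*q*b, q*a + p*b) = m * (of_int a - of_int b * ?s)" for a b
    unfolding rt2_conj_def by (subst pq(2)) (simp add: algebra_simps)
  show ?thesis
  proof (intro set_eqI iffI)
    fix z assume z: "z \<in> grid_solutions x0 x1 y0 y1"
    obtain c d where zcd: "z = (c, d)" by (cases z)
    define a where "a = p*c - 2*q*d"
    define b where "b = p*d - q*c"
    have A: "of_int a + of_int b * ?s = m * (of_int c + of_int d * ?s)"
      unfolding a_def b_def by (subst pq(2)) (simp add: algebra_simps)
    have B: "of_int a - of_int b * ?s = 1/m * (of_int c - of_int d * ?s)"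
      unfolding a_def b_def pq(1) by (simp add: algebra_simps)
    have zz: "x0 \<le> of_int c + of_int d * ?s" "of_int c + of_int d * ?s \<le> x1"
      "y0 \<le> of_int c - of_int d * ?s" "of_int c - of_int d * ?s \<le> y1"
      using z unfolding zcd grid_solutions_def rt2_val_def rt2_conj_def by auto
    have "(a, b) \<in> Sc (m*x0) (m*x1) (1/m*y0) (1/m*y1)"
      unfolding Sc_def using zz m by (simp add: A B mult_left_mono divide_right_mono)
    moreover have "(c, d) = (p*a + 2*q*b, q*a + p*b)"
    proof -
      have "p*a + 2*q*b = (p*p - 2*q*q) * c" unfolding a_def b_def by (simp add: algebra_simps)
      moreover have "q*a + p*b = (p*p - 2*q*q) * d" unfolding a_def b_def by (simp add: algebra_simps)
      ultimately show ?thesis using u by simp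
    qed
    ultimately show "z \<in> (\<lambda>(a, b). (p*a + 2*q*b, q*a + p*b)) ` Sc (m*x0) (m*x1) (1/m*y0) (1/m*y1)"
      unfolding zcd by force
  next
    fix z assume "z \<in> (\<lambda>(a, b). (p*a + 2*q*b, q*a + p*b)) ` Sc (m*x0) (m*x1) (1/m*y0) (1/m*y1)"
    then obtain a b where z: "z = (p*a + 2*q*b, q*a + p*b)" and ab: "(a, b) \<in> Sc (m*x0) (m*x1) (1/m*y0) (1/m*y1)"
      by auto
    have h: "m*x0 \<le> of_int a + of_int b * ?s" "of_int a + of_int b * ?s \<le> m*x1"
      "1/m*y0 \<le> of_int a - of_int b * ?s" "of_int a - of_int b * ?s \<le> 1/m*y1"
      using ab unfolding Sc_def by auto
    have "x0 \<le> 1/m * (of_int a + of_int b * ?s)" "1/m * (of_int a + of_int b * ?s) \<le> x1"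
      "y0 \<le> m * (of_int a - of_int b * ?s)" "m * (of_int a - of_int b * ?s) \<le> y1"
      using h m by (auto simp: field_simps)
    then show "z \<in> grid_solutions x0 x1 y0 y1"
      unfolding grid_solutions_def z by (simp add: val cnj)
  qed
qed

lemma scale:
  assumes "x0 \<le> x1" "y0 \<le> y1"
  shows "mm x0 x1 y0 y1 > 0" "(y1 - y0) / mm x0 x1 y0 y1 < 12"
    "(y1 - y0) / mm x0 x1 y0 y1 < 1 \<Longrightarrow> mm x0 x1 y0 y1 * (x1 - x0) < 1"
proof -
  define e where "e = 1 / (x1 - x0 + 1)"
  define t where "t = (y1 - y0 + e) * (1/2)"
  define k where "k = \<lfloor>log mu t\<rfloor>"
  have m: "mm x0 x1 y0 y1 = mu powr of_int k" unfolding mm_def k_def t_def e_def ..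
  have e0: "e > 0" using assms unfolding e_def by simp
  have t0: "t > 0" using assms e0 unfolding t_def by simp
  have mu1: "mu > 1" by (rule mu_gt1)
  show mpos: "mm x0 x1 y0 y1 > 0" unfolding m using mu1 by simp
  have "of_int k \<le> log mu t" unfolding k_def by simp
  then have "mu powr of_int k \<le> mu powr log mu t" using mu1 by (intro powr_mono) auto
  also have "\<dots> = t" using mu1 t0 by simp
  finally have mt: "mm x0 x1 y0 y1 \<le> t" unfolding m .
  have "log mu t < of_int k + 1" unfolding k_def by linarith
  then have "mu powr log mu t < mu powr (of_int k + 1)" using mu1 by (intro powr_less_mono) auto
  also have "\<dots> = mu powr of_int k * mu" using mu1 by (simp add: powr_add)
  finally have tm: "t < mm x0 x1 y0 y1 * mu" unfolding m using mu1 t0 by simp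
  have mu6: "mu < 6" by (rule mu_lt6)
  have "y1 - y0 < 2 * t" unfolding t_def using e0 by simp
  also have "\<dots> < 2 * (mm x0 x1 y0 y1 * mu)" using tm by simp
  also have "\<dots> \<le> 12 * mm x0 x1 y0 y1" using mu6 mpos by simp
  finally show "(y1 - y0) / mm x0 x1 y0 y1 < 12" using mpos by (simp add: divide_less_eq)
  assume "(y1 - y0) / mm x0 x1 y0 y1 < 1"
  then have "y1 - y0 < mm x0 x1 y0 y1" using mpos by (simp add: divide_less_eq)
  with mt have "y1 - y0 < e" unfolding t_def by simp
  then have te: "t < e" unfolding t_def by simp
  have "mm x0 x1 y0 y1 * (x1 - x0) \<le> e * (x1 - x0)"
    using mt te assms by (intro mult_right_mono) auto
  also have "\<dots> < 1" unfolding e_def using assms by (simp add: field_simps)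
  finally show "mm x0 x1 y0 y1 * (x1 - x0) < 1" .
qed

lemma count:
  assumes d0: "0 \<le> Y1 - Y0" and d12: "Y1 - Y0 < 12" and d1: "Y1 - Y0 < 1 \<Longrightarrow> X1 - X0 < 1"
  shows "nat (\<lfloor>(X1 - Y0) / (2 * sqrt 2)\<rfloor> - \<lceil>(X0 - Y1) / (2 * sqrt 2)\<rceil> + 1)
     \<le> length (PL X0 X1 Y0 Y1) + 15"
proof -
  define c :: real where "c = 2 * sqrt 2"
  have c2: "c \<ge> 2" unfolding c_def by simp
  have c0: "c > 0" using c2 by simp
  define b0 where "b0 = \<lceil>(X0 - Y1) / c\<rceil>"
  define BM where "BM = \<lfloor>(X1 - Y0) / c\<rfloor>"
  define E1 where "E1 = {b::int. X0 - Y1 \<le> c * of_int b \<and> c * of_int b \<le> (X0 - Y1) + 12}"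
  define E2 where "E2 = {b::int. (X1 - Y0 - 12) \<le> c * of_int b \<and> c * of_int b \<le> (X1 - Y0 - 12) + 12}"
  define E3 where "E3 = {b::int. X0 - Y0 \<le> c * of_int b \<and> c * of_int b \<le> (X0 - Y0) + 1}"
  define S where "S = Sc X0 X1 Y0 Y1"
  have finS: "finite S" unfolding S_def set_PL[symmetric] by simp
  have cardS: "card S = length (PL X0 X1 Y0 Y1)"
    unfolding S_def set_PL[symmetric] using distinct_PL distinct_card by blast
  have sub: "{b0..BM} \<subseteq> snd ` S \<union> E1 \<union> E2 \<union> E3"
  proof
    fix b assume b: "b \<in> {b0..BM}"
    then have "(X0 - Y1) / c \<le> of_int b" "of_int b \<le> (X1 - Y0) / c"
      unfolding b0_def BM_def by (auto simp: ceiling_le_iff le_floor_iff)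
    then have lb: "X0 - Y1 \<le> c * of_int b" and ub: "c * of_int b \<le> X1 - Y0" using c0
      by (simp_all add: divide_le_eq le_divide_eq mult.commute)
    show "b \<in> snd ` S \<union> E1 \<union> E2 \<union> E3"
    proof (rule ccontr)
      assume nb: "b \<notin> snd ` S \<union> E1 \<union> E2 \<union> E3"
      then have g1: "c * of_int b > X0 - Y1 + 12" using lb unfolding E1_def by auto
      have g2: "c * of_int b < X1 - Y0 - 12" using nb ub unfolding E2_def by auto
      have m1: "X0 - Y0 \<le> c * of_int b" using g1 d12 by linarith
      have m2: "c * of_int b \<le> X1 - Y1" using g2 d12 by linarith
      have g3: "c * of_int b > X0 - Y0 + 1" using nb m1 unfolding E3_def by auto
      have dd: "Y1 - Y0 \<ge> 1"
      proof (rule ccontr)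
        assume "\<not> 1 \<le> Y1 - Y0"
        then have "X1 - X0 < 1" using d1 by simp
        then show False using g3 m2 d0 by linarith
      qed
      define a where "a = \<lceil>Y0 + of_int b * sqrt 2\<rceil>"
      have bs: "c * of_int b = 2 * (of_int b * sqrt 2)" unfolding c_def by simp
      have a1: "Y0 + of_int b * sqrt 2 \<le> of_int a" unfolding a_def by simp
      have a2: "of_int a < Y0 + of_int b * sqrt 2 + 1" unfolding a_def by linarith
      have "(a, b) \<in> S" unfolding S_def Sc_def using a1 a2 dd m1 m2 bs by auto
      then have "b \<in> snd ` S" by force
      with nb show False by simp
    qed
  qed
  have fin: "finite E1" "finite E2" "finite E3" unfolding E1_def E2_def E3_def
    using finite_strip[OF c0] by blast+
  have "card {b0..BM} \<le> card (snd ` S \<union> E1 \<union> E2 \<union> E3)"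
    by (rule card_mono) (use finS fin sub in auto)
  also have "\<dots> \<le> card (snd ` S) + card E1 + card E2 + card E3"
    by (meson add_mono card_Un_le le_trans order_refl)
  also have "card (snd ` S) \<le> card S" using finS by (rule card_image_le)
  finally have 1: "card {b0..BM} \<le> card S + card E1 + card E2 + card E3" by simp
  have "real (card E1) \<le> 12 / c + 1" unfolding E1_def by (rule card_strip[OF c0]) simp
  also have "12 / c \<le> 6" using c2 by (simp add: divide_le_eq)
  finally have e1: "card E1 \<le> 7" by simp
  have "real (card E2) \<le> 12 / c + 1" unfolding E2_def by (rule card_strip[OF c0]) simp
  also have "12 / c \<le> 6" using c2 by (simp add: divide_le_eq)
  finally have e2: "card E2 \<le> 7" by simp
  have "real (card E3) \<le> 1 / c + 1" unfolding E3_def by (rule card_strip[OF c0]) simp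
  also have "1 / c \<le> 1/2" using c2 by (simp add: divide_le_eq)
  finally have e3: "card E3 \<le> 1" by simp
  have "card {b0..BM} = nat (BM - b0 + 1)" by simp
  with 1 e1 e2 e3 cardS show ?thesis unfolding b0_def BM_def c_def by linarith
qed

lemma outs_PL: "concat (map (outs m X0 X1 Y0 Y1) [b0..BM]) =
   map (\<lambda>(a, b). outp m a b) (concat (map (\<lambda>b. map (\<lambda>a. (a, b)) [lo X0 Y0 b..hi X1 Y1 b]) [b0..BM]))"
  by (simp add: outs_def[abs_def] map_concat o_def)

theorem proposition5p27:
  "\<exists>(P :: instr list) (C :: nat).
     \<forall>x0 x1 y0 y1 :: real. x0 \<le> x1 \<longrightarrow> y0 \<le> y1 \<longrightarrow>
       (\<exists>n. halted P (run P n (init_state x0 x1 y0 y1)) \<and>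
            (let out = snd (snd (run P n (init_state x0 x1 y0 y1))) in
               distinct out \<and>
               set out = (\<lambda>(a, b). (real_of_int a, real_of_int b)) ` grid_solutions x0 x1 y0 y1 \<and>
               n \<le> C * (length out + 1)))"
proof (rule exI[of _ prog], rule exI[of _ 500], intro allI impI)
  fix x0 x1 y0 y1 :: real
  assume xx: "x0 \<le> x1" and yy: "y0 \<le> y1"
  define m where "m = mm x0 x1 y0 y1"
  define X0 where "X0 = m * x0"
  define X1 where "X1 = m * x1"
  define Y0 where "Y0 = 1 / m * y0"
  define Y1 where "Y1 = 1 / m * y1"
  define b0 where "b0 = \<lceil>(X0 - Y1) / (2 * sqrt 2)\<rceil>"
  define BM where "BM = \<lfloor>(X1 - Y0) / (2 * sqrt 2)\<rfloor>"
  have mpos: "m > 0" unfolding m_def using scale[OF xx yy] by simp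
  obtain r where r: "run prog 30 (init_state x0 x1 y0 y1) = (30, r, [])"
    "r 4 = 1" "r 6 = sqrt 2" "r 7 = 1/2" "r 13 = m" "r 14 = 1 / m"
    "r 15 = X0" "r 16 = X1" "r 17 = Y0" "r 18 = Y1" "r 19 = 2 * sqrt 2" "r 21 = 0"
    "r 22 = of_int b0" "r 23 = of_int BM"
    using prelude[of x0 x1 y0 y1] unfolding m_def[symmetric] X0_def X1_def Y0_def Y1_def b0_def BM_def
    by blast
  define N where "N = nat (BM - b0 + 1)"
  define L where "L = concat (map (outs m X0 X1 Y0 Y1) [b0..BM])"
  have "\<exists>r'. run prog (1 + 29 * N + 12 * length L) (30, r, []) = (31, r', [] @ L)"
    unfolding L_def by (rule outer[OF r(2-14) N_def])
  then obtain r' where r': "run prog (1 + 29 * N + 12 * length L) (30, r, []) = (31, r', L)"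
    by auto
  define n where "n = 30 + (1 + 29 * N + 12 * length L)"
  have run: "run prog n (init_state x0 x1 y0 y1) = (31, r', L)"
    unfolding n_def run_add[of prog 30 "1 + 29 * N + 12 * length L"] r(1) r' ..
  have halt: "halted prog (31, r', L)" by (simp add: halted_def prog_31)
  define PLs where "PLs = PL X0 X1 Y0 Y1"
  have LPL: "L = map (\<lambda>(a, b). outp m a b) PLs"
    unfolding L_def PLs_def PL_def outs_PL b0_def BM_def ..
  define k where "k = \<lfloor>log mu ((y1 - y0 + 1 / (x1 - x0 + 1)) * (1/2))\<rfloor>"
  have mk: "m = mu powr of_int k" unfolding m_def mm_def k_def ..
  obtain p q :: int where pq0: "mu powr of_int k = of_int p + of_int q * sqrt 2"
     "mu powr of_int (-k) = of_int p - of_int q * sqrt 2"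
    using mu_int[of k] by blast
  have "mu powr of_int (-k) = 1 / m" unfolding mk of_int_minus powr_minus by (simp add: divide_inverse)
  then have pq: "m = of_int p + of_int q * sqrt 2" "1 / m = of_int p - of_int q * sqrt 2"
    using pq0 mk by simp_all
  define f where "f = (\<lambda>(a::int, b::int). (p*a + 2*(-q)*b, (-q)*a + p*b))"
  have pq': "1/m = of_int p + of_int (-q) * sqrt 2" "m = of_int p - of_int (-q) * sqrt 2"
    using pq by simp_all
  have outpf: "(\<lambda>(a, b). outp m a b) = (\<lambda>(a, b). (real_of_int a, real_of_int b)) \<circ> f"
    by (auto simp: f_def outp_int[OF pq'])
  have grid: "grid_solutions x0 x1 y0 y1 = f ` set PLs"
    unfolding PLs_def set_PL f_def X0_def X1_def Y0_def Y1_def by (rule grid_image[OF mpos pq'])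
  have injf: "inj_on ((\<lambda>(a, b). (real_of_int a, real_of_int b)) \<circ> f) (set PLs)"
  proof -
    have "1 = 1/m * m" using mpos by simp
    also have "\<dots> = of_int (p*p - 2*q*q)" unfolding pq(2) by (subst pq(1)) (simp add: algebra_simps)
    finally have u: "p*p - 2*q*q = 1" by linarith
    have "inj f"
    proof (rule injI)
      fix z w assume e: "f z = f w"
      obtain a b where z: "z = (a, b)" by (cases z)
      obtain c d where w: "w = (c, d)" by (cases w)
      have e1: "p*a - 2*q*b = p*c - 2*q*d" "-q*a + p*b = -q*c + p*d" using e unfolding z w f_def by auto
      have "(p*p - 2*q*q) * a = p*(p*a - 2*q*b) + 2*q*(-q*a + p*b)" by (simp add: algebra_simps)
      also have "\<dots> = (p*p - 2*q*q) * c" unfolding e1 by (simp add: algebra_simps)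
      finally have "a = c" using u by simp
      have "(p*p - 2*q*q) * b = q*(p*a - 2*q*b) + p*(-q*a + p*b)" by (simp add: algebra_simps)
      also have "\<dots> = (p*p - 2*q*q) * d" unfolding e1 by (simp add: algebra_simps)
      finally have "b = d" using u by simp
      show "z = w" using \<open>a = c\<close> \<open>b = d\<close> z w by simp
    qed
    moreover have "inj (\<lambda>(a::int, b::int). (real_of_int a, real_of_int b))" by (auto simp: inj_def)
    ultimately have "inj ((\<lambda>(a::int, b::int). (real_of_int a, real_of_int b)) \<circ> f)"
      by (intro inj_compose) auto
    then show ?thesis by (rule inj_on_subset) simp
  qed
  have dist: "distinct L" unfolding LPL outpf
    using distinct_PL[of X0 X1 Y0 Y1] injf unfolding PLs_def by (simp add: distinct_map)
  have setL: "set L = (\<lambda>(a, b). (real_of_int a, real_of_int b)) ` grid_solutions x0 x1 y0 y1"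
    unfolding LPL outpf grid by (simp add: image_comp)
  have sc: "(y1 - y0) / m < 12" "(y1 - y0) / m < 1 \<Longrightarrow> m * (x1 - x0) < 1"
    using scale[OF xx yy] unfolding m_def by auto
  have "Y1 - Y0 = (y1 - y0) / m" "X1 - X0 = m * (x1 - x0)"
    unfolding X0_def X1_def Y0_def Y1_def by (simp_all add: algebra_simps diff_divide_distrib)
  then have cnt: "N \<le> length PLs + 15"
    unfolding N_def BM_def b0_def PLs_def
    using count[of Y1 Y0 X1 X0] sc yy mpos by simp
  have lenL: "length L = length PLs" by (simp add: LPL)
  have "29 * N \<le> 29 * (length L + 15)" using cnt lenL by simp
  then have "n \<le> 500 * (length L + 1)" unfolding n_def by simp
  then show "\<exists>n. halted prog (run prog n (init_state x0 x1 y0 y1)) \<and>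
            (let out = snd (snd (run prog n (init_state x0 x1 y0 y1))) in
               distinct out \<and>
               set out = (\<lambda>(a, b). (real_of_int a, real_of_int b)) ` grid_solutions x0 x1 y0 y1 \<and>
               n \<le> 500 * (length out + 1))"
    using run halt dist setL by (intro exI[of _ n]) simp
qed

end
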